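(* Let $V$ be a separable Banach space, $\alpha,\beta\in(0,1)$, $\lambda\in(0,1]$ with $\alpha(1+\beta)>1$ and $\beta+\lambda\le1$, and $A\in C^\alpha_tC^{\beta,\lambda}_V$. Suppose the YDE associated to $A$ admits a flow of homeomorphisms $\Phi$ which is spatially locally $\gamma$-Hölder continuous, for some $\gamma\in(0,1)$ with $\alpha\gamma(1+\beta)>1$. Then for any $x_0\in V$ there exists a unique solution in the class $C^\alpha_tV$ to $x_t=x_0+\int_0^tA(\mathrm{d} s,x_s)$, $t\in[0,T]$.
   Context: Fix $T>0$, $\Delta_2=\{(s,t):0\le s\le t\le T\}$. For $f:V\to V$, $R>0$: $\llbracket f\rrbracket_{\beta,R}=\sup_{x\ne y,\|x\|,\|y\|\le R}\|f(x)-f(y)\|/\|x-y\|^\beta$; $\llbracket f\rrbracket_{\beta,\lambda}=\sup_{R\ge1}R^{-\lambda}\llbracket f\rrbracket_{\beta,R}$, $\|f\|_{\beta,\lambda}=\llbracket f\rrbracket_{\beta,\lambda}+\|f(0)\|$. A field $A:[0,T]\times V\to V$ with $A(0,\cdot)=0$, $A_{s,t}(x)=A(t,x)-A(s,x)$ is in $C^\alpha_tC^{\beta,\lambda}_V$ if $\sup_{s<t}\|A_{s,t}\|_{\beta,\lambda}/|t-s|^\alpha<\infty$. $C^\alpha_tV$: $\alpha$-Hölder paths $[0,T]\to V$. Integral: $\int_s^tA(\mathrm{d} r,x_r)=\lim_{|\Pi|\to0}\sum_iA_{t_i,t_{i+1}}(x_{t_i})$. A flow of homeomorphisms is $\Phi:\Delta_2\times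 V\to V$, $\Phi_{s\to t}(x)=\Phi(s,t,x)$, with $\Phi(t,t,x)=x$; $\Phi(s,\cdot,x)\in C^\alpha([s,T];V)$; $\Phi(s,t,x)=x+\int_s^tA(\mathrm{d} r,\Phi(s,r,x))$; $\Phi(u,t,\Phi(s,u,x))=\Phi(s,t,x)$ for $s\le u\le t$; and each $\Phi_{s\to t}$ a homeomorphism of $V$ with inverse $\Phi_{s\leftarrow t}$. It is spatially locally $\gamma$-Hölder continuous if for all $(s,t)\in\Delta_2$, $\Phi_{s\to t}$ and $\Phi_{s\leftarrow t}$ are $\gamma$-Hölder continuous on every bounded subset of $V$. *)

theory Defs
  imports "HOL-Analysis.Analysis"
begin

definition incr :: "(real \<Rightarrow> 'a::real_normed_vector \<Rightarrow> 'a) \<Rightarrow> real \<Rightarrow> real \<Rightarrow> 'a \<Rightarrow> 'a" where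
  "incr A s t x = A t x - A s x"

text \<open>A in C^alpha_t C^{beta,lambda}_V on [0,T]: A(0,.) = 0 and
  sup_{s<t} ( [A_{s,t}]_{beta,lambda} + |A_{s,t}(0)| ) / |t-s|^alpha < infinity,
  written out as the existence of a finite bound.\<close>
definition field_holder :: "real \<Rightarrow> real \<Rightarrow> real \<Rightarrow> real \<Rightarrow> (real \<Rightarrow> 'a::real_normed_vector \<Rightarrow> 'a) \<Rightarrow> bool" where
  "field_holder T \<alpha> \<beta> lam A \<longleftrightarrow>
     (\<forall>x. A 0 x = 0) \<and>
     (\<exists>C. \<forall>s t. 0 \<le> s \<and> s < t \<and> t \<le> T \<longrightarrow>
        norm (incr A s t 0) \<le> C * \<bar>t - s\<bar> powr \<alpha> \<and>
        (\<forall>R\<ge>1. \<forall>x y. x \<noteq> y \<and> norm x \<le> R \<and> norm y \<le> R \<longrightarrow>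
           norm (incr A s t x - incr A s t y) \<le> C * \<bar>t - s\<bar> powr \<alpha> * R powr lam * norm (x - y) powr \<beta>))"

definition holder_path :: "real \<Rightarrow> real \<Rightarrow> real \<Rightarrow> (real \<Rightarrow> 'a::real_normed_vector) \<Rightarrow> bool" where
  "holder_path \<alpha> a b x \<longleftrightarrow>
     (\<exists>C. \<forall>s\<in>{a..b}. \<forall>t\<in>{a..b}. norm (x t - x s) \<le> C * \<bar>t - s\<bar> powr \<alpha>)"

definition is_partition :: "real \<Rightarrow> real \<Rightarrow> real list \<Rightarrow> bool" where
  "is_partition s t P \<longleftrightarrow> length P \<ge> 2 \<and> hd P = s \<and> last P = t \<and> sorted P"

definition mesh :: "real list \<Rightarrow> real" where
  "mesh P = Max (insert 0 {P ! Suc i - P ! i | i. Suc i < length P})"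

definition riemann_sum :: "(real \<Rightarrow> 'a::real_normed_vector \<Rightarrow> 'a) \<Rightarrow> (real \<Rightarrow> 'a) \<Rightarrow> real list \<Rightarrow> 'a" where
  "riemann_sum A x P = (\<Sum>i<length P - 1. incr A (P ! i) (P ! Suc i) (x (P ! i)))"

definition has_young_integral :: "(real \<Rightarrow> 'a::real_normed_vector \<Rightarrow> 'a) \<Rightarrow> (real \<Rightarrow> 'a) \<Rightarrow> real \<Rightarrow> real \<Rightarrow> 'a \<Rightarrow> bool" where
  "has_young_integral A x s t I \<longleftrightarrow>
     (\<forall>\<epsilon>>0. \<exists>\<delta>>0. \<forall>P. is_partition s t P \<and> mesh P < \<delta> \<longrightarrow> norm (riemann_sum A x P - I) < \<epsilon>)"

definition yde_solution :: "real \<Rightarrow> (real \<Rightarrow> 'a::real_normed_vector \<Rightarrow> 'a) \<Rightarrow> 'a \<Rightarrow> (real \<Rightarrow> 'a) \<Rightarrow> bool" where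
  "yde_solution T A x0 x \<longleftrightarrow> x 0 = x0 \<and>
     (\<forall>t\<in>{0..T}. has_young_integral A x 0 t (x t - x0))"

definition is_flow :: "real \<Rightarrow> real \<Rightarrow> (real \<Rightarrow> 'a::real_normed_vector \<Rightarrow> 'a) \<Rightarrow>
    (real \<Rightarrow> real \<Rightarrow> 'a \<Rightarrow> 'a) \<Rightarrow> (real \<Rightarrow> real \<Rightarrow> 'a \<Rightarrow> 'a) \<Rightarrow> bool" where
  "is_flow T \<alpha> A \<Phi> \<Psi> \<longleftrightarrow>
     (\<forall>t\<in>{0..T}. \<forall>x. \<Phi> t t x = x) \<and>
     (\<forall>s\<in>{0..T}. \<forall>x. holder_path \<alpha> s T (\<lambda>t. \<Phi> s t x)) \<and>
     (\<forall>s\<in>{0..T}. \<forall>t\<in>{s..T}. \<forall>x. has_young_integral A (\<lambda>r. \<Phi> s r x) s t (\<Phi> s t x - x)) \<and>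
     (\<forall>s u t x. 0 \<le> s \<and> s \<le> u \<and> u \<le> t \<and> t \<le> T \<longrightarrow> \<Phi> u t (\<Phi> s u x) = \<Phi> s t x) \<and>
     (\<forall>s\<in>{0..T}. \<forall>t\<in>{s..T}. homeomorphism UNIV UNIV (\<Phi> s t) (\<Psi> s t))"

definition holder_on :: "real \<Rightarrow> 'a::real_normed_vector set \<Rightarrow> ('a \<Rightarrow> 'b::real_normed_vector) \<Rightarrow> bool" where
  "holder_on \<gamma> S f \<longleftrightarrow> (\<exists>C. \<forall>x\<in>S. \<forall>y\<in>S. norm (f x - f y) \<le> C * norm (x - y) powr \<gamma>)"

definition flow_locally_holder :: "real \<Rightarrow> real \<Rightarrow> (real \<Rightarrow> real \<Rightarrow> 'a::real_normed_vector \<Rightarrow> 'a) \<Rightarrow>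
    (real \<Rightarrow> real \<Rightarrow> 'a \<Rightarrow> 'a) \<Rightarrow> bool" where
  "flow_locally_holder T \<gamma> \<Phi> \<Psi> \<longleftrightarrow>
     (\<forall>s\<in>{0..T}. \<forall>t\<in>{s..T}. \<forall>B. bounded B \<longrightarrow> holder_on \<gamma> B (\<Phi> s t) \<and> holder_on \<gamma> B (\<Psi> s t))"

end

theory Submission
  imports Defs
begin

definition pairs :: "real list \<Rightarrow> (real \<times> real) list" where
  "pairs P = zip P (tl P)"

lemma pairs_Cons2[simp]: "pairs (a # b # r) = (a, b) # pairs (b # r)"
  by (simp add: pairs_def)

lemma pairs_single[simp]: "pairs [a] = []"
  by (simp add: pairs_def)

lemma pairs_append:
  "xs \<noteq> [] \<Longrightarrow> ys \<noteq> [] \<Longrightarrow> pairs (xs @ ys) = pairs xs @ (last xs, hd ys) # pairs ys"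
proof (induction xs)
  case Nil then show ?case by simp
next
  case (Cons a xs)
  show ?case
  proof (cases "xs = []")
    case True
    then show ?thesis using Cons.prems by (cases ys) (auto simp: pairs_def)
  next
    case False
    then obtain c xs' where "xs = c # xs'" by (cases xs) auto
    then show ?thesis using Cons False by (simp add: pairs_def)
  qed
qed

lemma riemann_sum_pairs:
  "riemann_sum A x P = sum_list (map (\<lambda>(p,q). incr A p q (x p)) (pairs P))"
proof -
  have "sum_list (map (\<lambda>(p,q). incr A p q (x p)) (pairs P))
      = (\<Sum>i = 0..<length (pairs P). (map (\<lambda>(p,q). incr A p q (x p)) (pairs P)) ! i)"
    by (simp add: sum_list_sum_nth)
  also have "\<dots> = (\<Sum>i<length P - 1. incr A (P ! i) (P ! Suc i) (x (P ! i)))"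
    by (rule sum.cong) (auto simp: pairs_def nth_tl)
  finally show ?thesis by (simp add: riemann_sum_def)
qed

lemma mem_pairs:
  "(p,q) \<in> set (pairs P) \<longleftrightarrow> (\<exists>i. Suc i < length P \<and> p = P ! i \<and> q = P ! Suc i)"
proof
  assume "(p,q) \<in> set (pairs P)"
  then show "\<exists>i. Suc i < length P \<and> p = P ! i \<and> q = P ! Suc i"
    unfolding pairs_def set_zip by (force simp: nth_tl)
next
  assume "\<exists>i. Suc i < length P \<and> p = P ! i \<and> q = P ! Suc i"
  then obtain i where i: "Suc i < length P" "p = P ! i" "q = P ! Suc i" by blast
  then have "(P ! i, tl P ! i) \<in> set (zip P (tl P))"
    unfolding set_zip by auto
  then show "(p,q) \<in> set (pairs P)" using i by (simp add: pairs_def nth_tl)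
qed

lemma set_pairs_gaps:
  "{P ! Suc i - P ! i | i. Suc i < length P} = (\<lambda>(p,q). q - p) ` set (pairs P)"
proof
  show "{P ! Suc i - P ! i | i. Suc i < length P} \<subseteq> (\<lambda>(p,q). q - p) ` set (pairs P)"
  proof
    fix d assume "d \<in> {P ! Suc i - P ! i | i. Suc i < length P}"
    then obtain i where i: "Suc i < length P" "d = P ! Suc i - P ! i" by blast
    then have "(P ! i, P ! Suc i) \<in> set (pairs P)" by (auto simp: mem_pairs)
    then show "d \<in> (\<lambda>(p,q). q - p) ` set (pairs P)" using i by force
  qed
next
  show "(\<lambda>(p,q). q - p) ` set (pairs P) \<subseteq> {P ! Suc i - P ! i | i. Suc i < length P}"
    by (auto simp: mem_pairs)
qed

lemma mesh_lt_iff: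
  assumes "\<delta> > 0"
  shows "mesh P < \<delta> \<longleftrightarrow> (\<forall>(p,q)\<in>set (pairs P). q - p < \<delta>)"
  unfolding mesh_def set_pairs_gaps using assms by auto

lemma sorted_pairs: "sorted P \<Longrightarrow> (p,q) \<in> set (pairs P) \<Longrightarrow> p \<le> q"
  unfolding pairs_def set_zip by (auto simp: nth_tl sorted_iff_nth_mono)

lemma riemann_sum_append:
  assumes "xs \<noteq> []" "length ys \<ge> 2" "hd ys = last xs"
  shows "riemann_sum A x (xs @ tl ys) = riemann_sum A x xs + riemann_sum A x ys"
proof -
  obtain b c r where ys: "ys = b # c # r" using assms(2)
    by (cases ys; cases "tl ys") auto
  have "pairs (xs @ tl ys) = pairs xs @ (last xs, c) # pairs (c # r)"
    using pairs_append[OF assms(1), of "c # r"] ys by simp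
  then show ?thesis using ys assms(3) by (simp add: riemann_sum_pairs)
qed

lemma mesh_append:
  assumes "\<delta> > 0" "xs \<noteq> []" "length ys \<ge> 2" "hd ys = last xs"
    "mesh xs < \<delta>" "mesh ys < \<delta>"
  shows "mesh (xs @ tl ys) < \<delta>"
proof -
  obtain b c r where ys: "ys = b # c # r" using assms(3)
    by (cases ys; cases "tl ys") auto
  have "pairs (xs @ tl ys) = pairs xs @ (last xs, c) # pairs (c # r)"
    using pairs_append[OF assms(2), of "c # r"] ys by simp
  then show ?thesis using assms ys by (auto simp: mesh_lt_iff)
qed

definition unif :: "real \<Rightarrow> real \<Rightarrow> nat \<Rightarrow> real list" where
  "unif s u N = map (\<lambda>i. s + (u - s) * real i / real N) [0..<Suc N]"

lemma unif_partition:
  assumes "s \<le> u" "N > 0"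
  shows "is_partition s u (unif s u N)"
proof -
  have "sorted (unif s u N)" unfolding sorted_iff_nth_mono
  proof (intro allI impI)
    fix i j assume ij0: "i \<le> j" "j < length (unif s u N)"
    then have ij: "i \<le> j \<and> j < length (unif s u N)" by simp
    then have "(u - s) * real i \<le> (u - s) * real j" using assms by (simp add: mult_left_mono)
    then have "(u - s) * real i / real N \<le> (u - s) * real j / real N"
      by (simp add: divide_right_mono)
    then show "unif s u N ! i \<le> unif s u N ! j" using ij
      unfolding unif_def by (simp del: upt_Suc add: nth_map)
  qed
  moreover have "hd (unif s u N) = s" by (simp add: unif_def hd_map del: upt_Suc)
  moreover have "last (unif s u N) = u" using assms by (simp add: unif_def last_map)
  moreover have "length (unif s u N) \<ge> 2" using assms by (simp add: unif_def)
  ultimately show ?thesis by (simp add: is_partition_def)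
qed

lemma unif_mesh:
  assumes "s \<le> u" "N > 0" "(u - s) / real N < \<delta>"  "\<delta> > 0"
  shows "mesh (unif s u N) < \<delta>"
proof -
  have "\<forall>(p,q)\<in>set (pairs (unif s u N)). q - p < \<delta>"
  proof (clarify)
    fix p q assume "(p,q) \<in> set (pairs (unif s u N))"
    then obtain i where i: "Suc i < length (unif s u N)" "p = unif s u N ! i" "q = unif s u N ! Suc i"
      by (auto simp: mem_pairs)
    then have i2: "i < N" "p = s + (u - s) * real i / real N"
        "q = s + (u - s) * real (Suc i) / real N"
      unfolding unif_def by (auto simp del: upt_Suc)
    have "q - p = (u - s) / real N" using i2 assms by (simp add: field_simps)
    then show "q - p < \<delta>" using assms by simp
  qed
  then show ?thesis using assms by (simp add: mesh_lt_iff)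
qed

lemma exists_fine_partition:
  assumes "s \<le> u" "\<delta> > 0"
  shows "\<exists>P. is_partition s u P \<and> mesh P < \<delta> \<and> set P \<subseteq> {s..u}"
proof -
  obtain N :: nat where N: "N > (u - s) / \<delta>" using reals_Archimedean2 by blast
  have Npos: "N > 0" using N assms
    by (metis divide_nonneg_pos diff_ge_0_iff_ge le_less_trans of_nat_0 of_nat_less_iff not_gr_zero)
  have "(u - s) / real N < \<delta>" using N Npos assms by (simp add: field_simps)
  then have "mesh (unif s u N) < \<delta>" using unif_mesh assms Npos by blast
  moreover have "set (unif s u N) \<subseteq> {s..u}"
  proof
    fix p assume "p \<in> set (unif s u N)"
    then obtain i where i: "i \<le> N" "p = s + (u - s) * real i / real N"
      unfolding unif_def by (auto simp del: upt_Suc simp: less_Suc_eq_le)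
    have "(u - s) * real i \<le> (u - s) * real N" using i assms by (simp add: mult_left_mono)
    then have "(u - s) * real i / real N \<le> (u - s)" using Npos
      by (simp add: pos_divide_le_eq)
    moreover have "0 \<le> (u - s) * real i / real N" using assms by simp
    ultimately show "p \<in> {s..u}" using i by auto
  qed
  ultimately show ?thesis using unif_partition[OF assms(1) Npos] by blast
qed

lemma partition_set:
  assumes "is_partition s u P" shows "set P \<subseteq> {s..u}"
proof
  fix p assume p: "p \<in> set P"
  have ne: "P \<noteq> []" using assms by (auto simp: is_partition_def)
  have sorted: "sorted P" using assms by (simp add: is_partition_def)
  obtain i where i: "i < length P" "p = P ! i" using p by (auto simp: in_set_conv_nth)
  have "P ! 0 \<le> P ! i" using sorted i by (simp add: sorted_iff_nth_mono)
  moreover have "P ! i \<le> P ! (length P - 1)" using sorted i by (simp add: sorted_iff_nth_mono)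
  ultimately show "p \<in> {s..u}" using assms ne i
    by (auto simp: is_partition_def hd_conv_nth last_conv_nth)
qed


lemma norm4:
  fixes X Y Z W :: "'a::real_normed_vector"
  shows "norm (X + Y - Z - W) \<le> norm X + norm Y + norm Z + norm W"
  using norm_triangle_ineq4[of "X+Y-Z" W] norm_triangle_ineq4[of "X+Y" Z] norm_triangle_ineq[of X Y]
  by linarith

lemma sewing_aux:
  fixes f :: "real \<Rightarrow> real \<Rightarrow> 'a::real_normed_vector"
  assumes th: "\<theta> > 1" and L: "L \<ge> 0"
    and diag: "\<And>p. f p p = 0"
    and delta: "\<And>a m b. s \<le> a \<Longrightarrow> a \<le> m \<Longrightarrow> m \<le> b \<Longrightarrow> b \<le> u \<Longrightarrow>
        norm (f a b - f a m - f m b) \<le> L * (b - a) powr \<theta>"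
  shows "P \<noteq> [] \<Longrightarrow> sorted P \<Longrightarrow> set P \<subseteq> {s..u} \<Longrightarrow>
    norm (sum_list (map (\<lambda>(p,q). f p q) (pairs P)) - f (hd P) (last P))
      \<le> (2 * L / (1 - 2 powr (1 - \<theta>))) * (last P - hd P) powr \<theta>"
proof (induction "length P" arbitrary: P rule: less_induct)
  case less
  define K where "K = 2 * L / (1 - 2 powr (1 - \<theta>))"
  define S where "S = (\<lambda>Q. sum_list (map (\<lambda>(p,q). f p q) (pairs Q)))"
  have c1: "2 powr (1 - \<theta>) < 1" using th by (simp add: powr_less_one)
  have Kge: "K \<ge> 0" unfolding K_def using c1 L by simp
  have Kid: "K * 2 powr (1 - \<theta>) + 2 * L = K"
  proof -
    have gen: "\<And>c::real. c < 1 \<Longrightarrow> 2 * L / (1 - c) * c + 2 * L = 2 * L / (1 - c)"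
    proof -
      fix c :: real assume "c < 1"
      then have "1 - c \<noteq> 0" by simp
      then show "2 * L / (1 - c) * c + 2 * L = 2 * L / (1 - c)" by (simp add: field_simps)
    qed
    show ?thesis unfolding K_def using gen[OF c1] .
  qed
  show ?case
  proof (cases "length P = 1")
    case True
    then obtain p where "P = [p]" by (cases P) auto
    then show ?thesis by (simp add: diag)
  next
    case False
    define n where "n = length P"
    have n2: "n \<ge> 2" using False less.prems(1) unfolding n_def by (cases P) (auto simp: Suc_le_eq)
    define a0 where "a0 = hd P"
    define b0 where "b0 = last P"
    have a0n: "a0 = P ! 0" using less.prems(1) by (simp add: a0_def hd_conv_nth)
    have b0n: "b0 = P ! (n - 1)" using less.prems(1) by (simp add: b0_def n_def last_conv_nth)
    have ab: "a0 \<le> b0" using less.prems(2) n2 a0n b0n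
      by (simp add: sorted_iff_nth_mono n_def)
    define mid where "mid = (a0 + b0) / 2"
    define I where "I = {i. i \<le> n - 2 \<and> P ! i \<le> mid}"
    have finI: "finite I" unfolding I_def by simp
    have I0: "0 \<in> I" unfolding I_def mid_def using a0n ab by auto
    define k where "k = Max I"
    have kI: "k \<in> I" unfolding k_def using finI I0 by (intro Max_in) auto
    then have k1: "k \<le> n - 2" "P ! k \<le> mid" unfolding I_def by auto
    have k2: "mid \<le> P ! Suc k"
    proof (cases "Suc k \<le> n - 2")
      case True
      have "Suc k \<notin> I" using Max_ge[OF finI] k_def by fastforce
      then show ?thesis using True unfolding I_def by auto
    next
      case False
      then have "Suc k = n - 1" using k1 n2 by auto
      then show ?thesis using b0n ab mid_def by auto
    qed
    define xs where "xs = take (Suc k) P"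
    define ys where "ys = drop (Suc k) P"
    have Pxy: "P = xs @ ys" by (simp add: xs_def ys_def)
    have xsne: "xs \<noteq> []" using n2 less.prems(1) by (simp add: xs_def)
    have ysne: "ys \<noteq> []" using n2 k1 by (simp add: ys_def n_def)
    have lenx: "length xs < length P" using k1 n2 by (simp add: xs_def n_def)
    have leny: "length ys < length P" using k1 n2 by (simp add: ys_def n_def)
    have lastx: "last xs = P ! k"
    proof -
      have "length xs = Suc k" using k1 n2 by (simp add: xs_def n_def)
      then show ?thesis using xsne by (simp add: last_conv_nth xs_def)
    qed
    have hdy: "hd ys = P ! Suc k" using k1 n2
      by (simp add: ys_def hd_drop_conv_nth n_def)
    have hdx: "hd xs = a0" using xsne Pxy a0_def by (metis hd_append2)
    have lasty: "last ys = b0" using ysne Pxy b0_def by simp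
    have sx: "sorted xs" "sorted ys" using less.prems(2) by (simp_all add: xs_def ys_def sorted_wrt_take sorted_wrt_drop)
    have setx: "set xs \<subseteq> {s..u}" "set ys \<subseteq> {s..u}" using less.prems(3)
      by (auto simp: xs_def ys_def dest: in_set_takeD in_set_dropD)
    define a where "a = P ! k"
    define b where "b = P ! Suc k"
    have IHx: "norm (S xs - f a0 a) \<le> K * (a - a0) powr \<theta>"
      using less.hyps[OF lenx xsne sx(1) setx(1)] hdx lastx unfolding K_def S_def a_def by simp
    have IHy: "norm (S ys - f b b0) \<le> K * (b0 - b) powr \<theta>"
      using less.hyps[OF leny ysne sx(2) setx(2)] hdy lasty unfolding K_def S_def b_def by simp
    have SP: "S P = S xs + f a b + S ys"
      unfolding S_def using pairs_append[OF xsne ysne] Pxy lastx hdy a_def b_def by simp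
    have inP: "\<And>i. i < n \<Longrightarrow> P ! i \<in> {s..u}" using less.prems(3) n_def nth_mem by blast
    have sa: "s \<le> a0" "b0 \<le> u" using inP[of 0] inP[of "n-1"] a0n b0n n2 by auto
    have aa: "a0 \<le> a" "a \<le> b" "b \<le> b0"
      using less.prems(2) k1 n2 a0n b0n unfolding a_def b_def sorted_iff_nth_mono n_def by auto
    have d1: "norm (f a0 b0 - f a0 a - f a b0) \<le> L * (b0 - a0) powr \<theta>"
      using delta[of a0 a b0] sa aa by auto
    have d2: "norm (f a b0 - f a b - f b b0) \<le> L * (b0 - a) powr \<theta>"
      using delta[of a b b0] sa aa by auto
    have "S P - f a0 b0 = (S xs - f a0 a) + (S ys - f b b0) - (f a0 b0 - f a0 a - f a b0)
        - (f a b0 - f a b - f b b0)" using SP by (simp add: algebra_simps)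
    then have "norm (S P - f a0 b0) \<le> norm (S xs - f a0 a) + norm (S ys - f b b0)
        + norm (f a0 b0 - f a0 a - f a b0) + norm (f a b0 - f a b - f b b0)"
      by (simp only: norm4)
    also have "\<dots> \<le> K * (a - a0) powr \<theta> + K * (b0 - b) powr \<theta> + L * (b0 - a0) powr \<theta>
        + L * (b0 - a) powr \<theta>" using IHx IHy d1 d2 by linarith
    also have "\<dots> \<le> K * ((b0 - a0) / 2) powr \<theta> + K * ((b0 - a0) / 2) powr \<theta>
        + L * (b0 - a0) powr \<theta> + L * (b0 - a0) powr \<theta>"
    proof -
      have "(a - a0) powr \<theta> \<le> ((b0 - a0) / 2) powr \<theta>"
        using aa k1 a_def mid_def th by (intro powr_mono2) auto
      moreover have "(b0 - b) powr \<theta> \<le> ((b0 - a0) / 2) powr \<theta>"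
        using aa k2 b_def mid_def th by (intro powr_mono2) auto
      moreover have "(b0 - a) powr \<theta> \<le> (b0 - a0) powr \<theta>"
        using aa th by (intro powr_mono2) auto
      ultimately show ?thesis using mult_left_mono[OF _ Kge] mult_left_mono[OF _ L]
        by (smt (verit))
    qed
    also have "\<dots> = (K * 2 powr (1 - \<theta>) + 2 * L) * (b0 - a0) powr \<theta>"
    proof -
      have e1: "((b0 - a0) / 2) powr \<theta> = (b0 - a0) powr \<theta> / 2 powr \<theta>"
        using ab by (simp add: powr_divide)
      have "2 powr (1 - \<theta>) = 2 / 2 powr \<theta>" by (simp add: powr_diff)
      moreover have "2 powr \<theta> > (0::real)" by simp
      ultimately show ?thesis unfolding e1 by (simp add: field_simps)
    qed
    also have "\<dots> = K * (b0 - a0) powr \<theta>" using Kid by simp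
    finally show ?thesis unfolding S_def K_def a0_def b0_def .
  qed
qed


definition FH :: "real \<Rightarrow> real \<Rightarrow> real \<Rightarrow> real \<Rightarrow> (real \<Rightarrow> 'a::real_normed_vector \<Rightarrow> 'a) \<Rightarrow> real \<Rightarrow> bool" where
  "FH T \<alpha> \<beta> lam A C \<longleftrightarrow> (\<forall>s t. 0 \<le> s \<and> s < t \<and> t \<le> T \<longrightarrow>
        norm (incr A s t 0) \<le> C * \<bar>t - s\<bar> powr \<alpha> \<and>
        (\<forall>R\<ge>1. \<forall>x y. x \<noteq> y \<and> norm x \<le> R \<and> norm y \<le> R \<longrightarrow>
           norm (incr A s t x - incr A s t y) \<le> C * \<bar>t - s\<bar> powr \<alpha> * R powr lam * norm (x - y) powr \<beta>))"

lemma incr_same[simp]: "incr A s s x = 0" by (simp add: incr_def)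

lemma FH_diff:
  assumes "FH T \<alpha> \<beta> lam A C" "C \<ge> 0" "0 \<le> s" "s \<le> t" "t \<le> T" "R \<ge> 1" "norm x \<le> R" "norm y \<le> R"
  shows "norm (incr A s t x - incr A s t y) \<le> C * (t - s) powr \<alpha> * R powr lam * norm (x - y) powr \<beta>"
proof (cases "s = t \<or> x = y")
  case True then show ?thesis using assms by auto
next
  case False then show ?thesis using assms unfolding FH_def by auto
qed

lemma delta_bound:
  assumes FH: "FH T \<alpha> \<beta> lam A C" and C: "C \<ge> 0" and ab: "\<alpha> > 0" "\<beta> > 0"
    and pts: "0 \<le> a" "a \<le> m" "m \<le> b" "b \<le> T"
    and R: "R \<ge> 1" "norm (z a) \<le> R" "norm (z m) \<le> R"
    and K: "K \<ge> 0" "norm (z a - z m) \<le> K * (m - a) powr \<alpha>"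
  shows "norm (incr A a b (z a) - incr A a m (z a) - incr A m b (z m))
      \<le> C * R powr lam * K powr \<beta> * (b - a) powr (\<alpha> * (1 + \<beta>))"
proof -
  have eq: "incr A a b (z a) - incr A a m (z a) - incr A m b (z m) = incr A m b (z a) - incr A m b (z m)"
    by (simp add: incr_def algebra_simps)
  have "norm (incr A m b (z a) - incr A m b (z m)) \<le> C * (b - m) powr \<alpha> * R powr lam * norm (z a - z m) powr \<beta>"
    using FH_diff[OF FH C] pts R by auto
  also have "\<dots> \<le> C * (b - m) powr \<alpha> * R powr lam * (K * (m - a) powr \<alpha>) powr \<beta>"
    using K ab C by (intro mult_left_mono powr_mono2) auto
  also have "\<dots> = C * R powr lam * K powr \<beta> * ((b - m) powr \<alpha> * (m - a) powr (\<alpha> * \<beta>))"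
    using K pts by (simp add: powr_mult powr_powr)
  also have "\<dots> \<le> C * R powr lam * K powr \<beta> * ((b - a) powr \<alpha> * (b - a) powr (\<alpha> * \<beta>))"
    using pts ab C K by (intro mult_left_mono mult_mono powr_mono2) auto
  also have "\<dots> = C * R powr lam * K powr \<beta> * (b - a) powr (\<alpha> * (1 + \<beta>))"
    by (simp add: powr_add[symmetric] algebra_simps)
  finally show ?thesis using eq by simp
qed

lemma remainder_bound:
  fixes z :: "real \<Rightarrow> 'a::real_normed_vector"
  assumes FH: "FH T \<alpha> \<beta> lam A C" and C: "C \<ge> 0" and ab: "\<alpha> > 0" "\<beta> > 0" "\<alpha> * (1 + \<beta>) > 1"
    and pts: "0 \<le> a" "a \<le> s" "s \<le> u" "u \<le> b" "b \<le> T"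
    and int: "\<forall>t\<in>{a..b}. has_young_integral A z a t (z t - z a)"
    and R: "R \<ge> 1" "\<forall>r\<in>{a..b}. norm (z r) \<le> R"
    and K: "K \<ge> 0" "\<forall>r\<in>{a..b}. \<forall>r'\<in>{a..b}. norm (z r - z r') \<le> K * \<bar>r - r'\<bar> powr \<alpha>"
  shows "norm (z u - z s - incr A s u (z s))
     \<le> (2 * (C * R powr lam * K powr \<beta>) / (1 - 2 powr (1 - \<alpha> * (1 + \<beta>)))) * (u - s) powr (\<alpha> * (1 + \<beta>))"
proof -
  define L where "L = C * R powr lam * K powr \<beta>"
  define B where "B = (2 * L / (1 - 2 powr (1 - \<alpha> * (1 + \<beta>)))) * (u - s) powr (\<alpha> * (1 + \<beta>))"
  define f where "f = (\<lambda>p q. incr A p q (z p))"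
  have L: "L \<ge> 0" unfolding L_def using C R K by simp
  have sew: "norm (riemann_sum A z Q - f s u) \<le> B" if Q: "is_partition s u Q" for Q
  proof -
    have "norm (sum_list (map (\<lambda>(p,q). f p q) (pairs Q)) - f (hd Q) (last Q))
      \<le> (2 * L / (1 - 2 powr (1 - \<alpha> * (1 + \<beta>)))) * (last Q - hd Q) powr (\<alpha> * (1 + \<beta>))"
    proof (rule sewing_aux[where s = s and u = u])
      show "\<alpha> * (1 + \<beta>) > 1" using ab by simp
      show "L \<ge> 0" by (rule L)
      show "\<And>p. f p p = 0" by (simp add: f_def)
      show "Q \<noteq> []" "sorted Q" using Q by (auto simp: is_partition_def)
      show "set Q \<subseteq> {s..u}" using partition_set[OF Q] .
      fix a' m b' assume h: "s \<le> a'" "a' \<le> m" "m \<le> b'" "b' \<le> u"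
      have ina: "a' \<in> {a..b}" "m \<in> {a..b}" using h pts by auto
      have "norm (z a' - z m) \<le> K * (m - a') powr \<alpha>"
        using K(2) ina h by (metis abs_minus_commute abs_of_nonneg diff_ge_0_iff_ge norm_minus_commute)
      then show "norm (f a' b' - f a' m - f m b') \<le> L * (b' - a') powr (\<alpha> * (1 + \<beta>))"
        unfolding f_def L_def
        using delta_bound[OF FH C ab(1,2), of a' m b' R z K] h pts R K ina by auto
    qed
    then show ?thesis using Q unfolding B_def riemann_sum_pairs f_def is_partition_def by simp
  qed
  have "norm (z u - z s - f s u) \<le> B + e" if e: "e > 0" for e
  proof -
    have e2: "e / 2 > 0" using e by simp
    obtain d1 where d1: "d1 > 0" "\<forall>P. is_partition a s P \<and> mesh P < d1 \<longrightarrow> norm (riemann_sum A z P - (z s - z a)) < e / 2"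
      using int pts e2 unfolding has_young_integral_def by (meson atLeastAtMost_iff order_trans)
    obtain d2 where d2: "d2 > 0" "\<forall>P. is_partition a u P \<and> mesh P < d2 \<longrightarrow> norm (riemann_sum A z P - (z u - z a)) < e / 2"
      using int pts e2 unfolding has_young_integral_def by (meson atLeastAtMost_iff order_trans)
    define d where "d = min d1 d2"
    have d: "d > 0" using d1 d2 by (simp add: d_def)
    obtain P where P: "is_partition a s P" "mesh P < d" using exists_fine_partition[OF pts(2) d] by blast
    obtain Q where Q: "is_partition s u Q" "mesh Q < d" using exists_fine_partition[OF pts(3) d] by blast
    have Pne: "P \<noteq> []" using P by (auto simp: is_partition_def)
    have Q2: "length Q \<ge> 2" and hdQ: "hd Q = last P" using P Q by (auto simp: is_partition_def)
    have PQ: "is_partition a u (P @ tl Q)"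
    proof -
      have "tl Q \<noteq> []" using Q2 by (cases Q) auto
      then have "last (P @ tl Q) = last Q" using Q2 by (cases Q) auto
      moreover have "sorted (P @ tl Q)"
      proof -
        have "set (tl Q) \<subseteq> set Q" by (cases Q) auto
        then have "\<forall>x\<in>set P. \<forall>y\<in>set (tl Q). x \<le> y"
          using partition_set[OF P(1)] partition_set[OF Q(1)] by force
        moreover have "sorted (tl Q)" using Q by (cases Q) (auto simp: is_partition_def)
        ultimately show ?thesis using P by (simp add: sorted_append is_partition_def)
      qed
      ultimately show ?thesis using P Q Pne by (auto simp: is_partition_def)
    qed
    have mPQ: "mesh (P @ tl Q) < d" using mesh_append[OF d Pne Q2 hdQ P(2) Q(2)] .
    have RS: "riemann_sum A z (P @ tl Q) = riemann_sum A z P + riemann_sum A z Q"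
      using riemann_sum_append[OF Pne Q2 hdQ] .
    have X: "norm (riemann_sum A z (P @ tl Q) - (z u - z a)) < e / 2"
      using d2 PQ mPQ d_def by auto
    have Y: "norm (riemann_sum A z P - (z s - z a)) < e / 2"
      using d1 P d_def by auto
    have Z: "norm (riemann_sum A z Q - f s u) \<le> B" using sew[OF Q(1)] .
    have "z u - z s - f s u = (riemann_sum A z P - (z s - z a)) - (riemann_sum A z (P @ tl Q) - (z u - z a))
       + (riemann_sum A z Q - f s u)" (is "_ = ?E") using RS by (simp add: algebra_simps)
    then have "norm (z u - z s - f s u) = norm ?E" by (rule arg_cong)
    moreover have "norm ?E \<le> norm (riemann_sum A z P - (z s - z a))
       + norm (riemann_sum A z (P @ tl Q) - (z u - z a)) + norm (riemann_sum A z Q - f s u)"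
      using norm_triangle_ineq4[of "riemann_sum A z P - (z s - z a)" "riemann_sum A z (P @ tl Q) - (z u - z a)"]
        norm_triangle_ineq[of "(riemann_sum A z P - (z s - z a)) - (riemann_sum A z (P @ tl Q) - (z u - z a))" "riemann_sum A z Q - f s u"]
      by linarith
    ultimately show ?thesis using X Y Z by linarith
  qed
  then have "norm (z u - z s - f s u) \<le> B" by (rule field_le_epsilon)
  then show ?thesis unfolding B_def L_def f_def .
qed


lemma fix_bound:
  fixes d a b \<beta> :: real
  assumes "d \<ge> 0" "a \<ge> 0" "b \<ge> 0" "0 < \<beta>" "\<beta> < 1" "d \<le> a + b * d powr \<beta>"
  shows "d \<le> max (2 * a) ((2 * b) powr (1 / (1 - \<beta>)))"
proof (cases "d \<le> 2 * a")
  case True then show ?thesis by simp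
next
  case False
  then have dpos: "d > 0" using assms by simp
  have "d / 2 < b * d powr \<beta>" using False assms by simp
  then have "d < 2 * b * d powr \<beta>" by simp
  then have "d / d powr \<beta> < 2 * b" using dpos by (simp add: divide_less_eq mult.commute)
  then have lt: "d powr (1 - \<beta>) < 2 * b" using dpos by (simp add: powr_diff)
  have "d = (d powr (1 - \<beta>)) powr (1 / (1 - \<beta>))" using assms dpos by (simp add: powr_powr)
  also have "\<dots> < (2 * b) powr (1 / (1 - \<beta>))"
    using lt assms dpos by (intro powr_less_mono2) auto
  finally show ?thesis by simp
qed

lemma inf_valid:
  fixes g c :: "'i \<Rightarrow> real"
  assumes c: "\<forall>i\<in>I. c i \<ge> 0" and K0: "K0 \<ge> L0" "\<forall>i\<in>I. g i \<le> K0 * c i"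
  shows "Inf {K. K \<ge> L0 \<and> (\<forall>i\<in>I. g i \<le> K * c i)} \<in> {K. K \<ge> L0 \<and> (\<forall>i\<in>I. g i \<le> K * c i)}"
proof -
  define S where "S = {K. K \<ge> L0 \<and> (\<forall>i\<in>I. g i \<le> K * c i)}"
  have ne: "S \<noteq> {}" using K0 unfolding S_def by blast
  have L: "L0 \<le> Inf S" using ne by (intro cInf_greatest) (auto simp: S_def)
  have "g i \<le> Inf S * c i" if i: "i \<in> I" for i
  proof (cases "c i > 0")
    case True
    have "g i / c i \<le> Inf S"
    proof (rule cInf_greatest[OF ne])
      fix K assume "K \<in> S"
      then have "g i \<le> K * c i" using i unfolding S_def by blast
      then show "g i / c i \<le> K" using True by (simp add: divide_le_eq)
    qed
    then show ?thesis using True by (simp add: divide_le_eq)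
  next
    case False
    then have "c i = 0" using c i by force
    then show ?thesis using K0 i by auto
  qed
  then show ?thesis using L unfolding S_def by blast
qed

lemma deriv_zero_holder:
  fixes f :: "real \<Rightarrow> 'a::real_normed_vector"
  assumes h: "h > 0" and p: "p > 1" and H: "H \<ge> 0"
    and bd: "\<forall>r\<in>S. \<bar>r - s\<bar> \<le> h \<longrightarrow> norm (f r - f s) \<le> H * \<bar>r - s\<bar> powr p"
  shows "(f has_derivative (\<lambda>_. 0)) (at s within S)"
  unfolding has_derivative_within_alt
proof (intro conjI allI impI)
  show "bounded_linear (\<lambda>_::real. 0::'a)" by simp
  fix e :: real assume e: "e > 0"
  define d where "d = min h ((e / (H + 1)) powr (1 / (p - 1)))"
  have dpos: "d > 0" using h e H by (simp add: d_def)
  show "\<exists>d>0. \<forall>y\<in>S. norm (y - s) < d \<longrightarrow> norm (f y - f s - 0) \<le> e * norm (y - s)"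
  proof (intro exI[of _ d] conjI ballI impI dpos)
    fix y assume y: "y \<in> S" "norm (y - s) < d"
    show "norm (f y - f s - 0) \<le> e * norm (y - s)"
    proof (cases "y = s")
      case True then show ?thesis by simp
    next
      case False
      define r where "r = \<bar>y - s\<bar>"
      have r: "r > 0" "r \<le> h" "r < (e / (H + 1)) powr (1 / (p - 1))"
        using False y d_def by (auto simp: r_def)
      have "r powr (p - 1) \<le> ((e / (H + 1)) powr (1 / (p - 1))) powr (p - 1)"
        using r p by (intro powr_mono2) auto
      also have "\<dots> = e / (H + 1)" using p e H by (simp add: powr_powr)
      finally have rp: "r powr (p - 1) \<le> e / (H + 1)" .
      have "norm (f y - f s) \<le> H * r powr p" using bd y r unfolding r_def by auto
      also have "\<dots> = H * r powr (p - 1) * r" using r by (simp add: powr_diff)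
      also have "\<dots> \<le> H * (e / (H + 1)) * r" using rp H r by (intro mult_right_mono mult_left_mono) auto
      also have "\<dots> \<le> e * r"
      proof -
        have "H * (e / (H + 1)) \<le> e" using H e by (simp add: field_simps)
        then show ?thesis using r by (intro mult_right_mono) auto
      qed
      finally show ?thesis by (simp add: r_def)
    qed
  qed
qed

lemma growth:
  assumes FH: "FH T \<alpha> \<beta> lam A C" and C: "C \<ge> 0" and pars: "\<beta> > 0" "lam > 0" "lam + \<beta> \<le> 1"
    and pts: "0 \<le> s" "s \<le> t" "t \<le> T" and R: "R \<ge> 1" "norm x \<le> R"
  shows "norm (incr A s t x) \<le> 2 * C * (t - s) powr \<alpha> * R"
proof (cases "s = t")
  case True then show ?thesis using C R by simp
next
  case False
  then have st: "s < t" using pts by simp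
  have b0: "norm (incr A s t 0) \<le> C * (t - s) powr \<alpha>" using FH st pts unfolding FH_def by auto
  have b1: "norm (incr A s t x - incr A s t 0) \<le> C * (t - s) powr \<alpha> * R powr lam * norm x powr \<beta>"
    using FH_diff[OF FH C pts(1,2,3) R(1), of x 0] R by simp
  have "R powr lam * norm x powr \<beta> \<le> R powr lam * R powr \<beta>"
    using R pars by (intro mult_left_mono powr_mono2) auto
  also have "\<dots> = R powr (lam + \<beta>)" by (simp add: powr_add)
  also have "\<dots> \<le> R powr 1" using R pars by (intro powr_mono) auto
  finally have "R powr lam * norm x powr \<beta> \<le> R" using R by simp
  then have "C * (t - s) powr \<alpha> * R powr lam * norm x powr \<beta> \<le> C * (t - s) powr \<alpha> * R"
    using C by (simp add: mult.assoc mult_left_mono)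
  moreover have "C * (t - s) powr \<alpha> \<le> C * (t - s) powr \<alpha> * R"
    using C R mult_left_mono[of 1 R "C * (t - s) powr \<alpha>"] by simp
  moreover have "norm (incr A s t x) \<le> norm (incr A s t 0) + norm (incr A s t x - incr A s t 0)"
    by (metis add.commute diff_add_cancel norm_triangle_ineq)
  ultimately show ?thesis using b0 b1 by linarith
qed


lemma flow_local:
  fixes z :: "real \<Rightarrow> 'a::real_normed_vector"
  assumes FH: "FH T \<alpha> \<beta> lam A C" and C: "C \<ge> 0"
    and pars: "T > 0" "0 < \<alpha>" "\<alpha> < 1" "0 < \<beta>" "\<beta> < 1" "0 < lam" "lam + \<beta> \<le> 1" "\<alpha> * (1 + \<beta>) > 1"
    and KS: "KS = 2 / (1 - 2 powr (1 - \<alpha> * (1 + \<beta>)))"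
    and M0: "M0 \<ge> 4 * C" "M0 \<ge> (2 * (KS * C * T powr (\<alpha> * (1 + \<beta>) - \<alpha>))) powr (1 / (1 - \<beta>))"
    and h: "h > 0" "M0 * h powr \<alpha> \<le> 1 / 2"
    and s: "0 \<le> s" "s \<le> T"
    and zs: "z s = x"
    and hol0: "\<forall>r\<in>{s..T}. \<forall>r'\<in>{s..T}. norm (z r - z r') \<le> K0 * \<bar>r - r'\<bar> powr \<alpha>"
    and int: "\<forall>t\<in>{s..T}. has_young_integral A z s t (z t - z s)"
    and u: "s \<le> u" "u \<le> T" "u - s \<le> h"
  shows "norm (z u - x) \<le> 2 * M0 * max 1 (norm x) * (u - s) powr \<alpha>
     \<and> norm (z u - x - incr A s u x) \<le> KS * C * 2 powr lam * (2 * M0) powr \<beta> * max 1 (norm x) * (u - s) powr (\<alpha> * (1 + \<beta>))"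
proof -
  define \<theta> where "\<theta> = \<alpha> * (1 + \<beta>)"
  define b where "b = min T (s + h)"
  have b: "s \<le> b" "b \<le> T" "b - s \<le> h" "u \<le> b" using s h u by (auto simp: b_def)
  have c1: "2 powr (1 - \<theta>) < 1" using pars by (simp add: powr_less_one \<theta>_def)
  have KSpos: "KS > 0" using KS c1 by (simp add: \<theta>_def)
  define IK where "IK = {s..b} \<times> {s..b}"
  define SK where "SK = {K. K \<ge> 0 \<and> (\<forall>i\<in>IK. norm (z (fst i) - z (snd i)) \<le> K * (\<bar>fst i - snd i\<bar> powr \<alpha>))}"
  have SKin: "Inf SK \<in> SK" unfolding SK_def
  proof (rule inf_valid)
    show "\<forall>i\<in>IK. 0 \<le> \<bar>fst i - snd i\<bar> powr \<alpha>" by simp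
    show "0 \<le> \<bar>K0\<bar>" by simp
    show "\<forall>i\<in>IK. norm (z (fst i) - z (snd i)) \<le> \<bar>K0\<bar> * \<bar>fst i - snd i\<bar> powr \<alpha>"
    proof
      fix i assume "i \<in> IK"
      then have "norm (z (fst i) - z (snd i)) \<le> K0 * \<bar>fst i - snd i\<bar> powr \<alpha>"
        using hol0 b unfolding IK_def by auto
      also have "\<dots> \<le> \<bar>K0\<bar> * \<bar>fst i - snd i\<bar> powr \<alpha>" by (intro mult_right_mono) auto
      finally show "norm (z (fst i) - z (snd i)) \<le> \<bar>K0\<bar> * \<bar>fst i - snd i\<bar> powr \<alpha>" .
    qed
  qed
  define Ks where "Ks = Inf SK"
  have Ks0: "Ks \<ge> 0" using SKin by (simp add: Ks_def SK_def)
  have Ksh: "\<And>r r'. r \<in> {s..b} \<Longrightarrow> r' \<in> {s..b} \<Longrightarrow> norm (z r - z r') \<le> Ks * \<bar>r - r'\<bar> powr \<alpha>"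
    using SKin unfolding Ks_def SK_def IK_def by auto
  have SKlow: "Ks \<le> K" if "K \<in> SK" for K
    unfolding Ks_def by (rule cInf_lower[OF that]) (auto simp: SK_def bdd_below_def)
  define SR where "SR = {R. R \<ge> 1 \<and> (\<forall>r\<in>{s..b}. norm (z r) \<le> R * 1)}"
  have SRin: "Inf SR \<in> SR" unfolding SR_def
  proof (rule inf_valid)
    show "\<forall>i\<in>{s..b}. (0::real) \<le> 1" by simp
    show "1 \<le> max 1 (norm x + \<bar>K0\<bar> * T powr \<alpha>)" by simp
    show "\<forall>i\<in>{s..b}. norm (z i) \<le> max 1 (norm x + \<bar>K0\<bar> * T powr \<alpha>) * 1"
    proof
      fix r assume r: "r \<in> {s..b}"
      have "r \<in> {s..T}" "s \<in> {s..T}" using r b s by auto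
      then have "norm (z r - z s) \<le> K0 * \<bar>r - s\<bar> powr \<alpha>" using hol0 by blast
      also have "\<dots> \<le> \<bar>K0\<bar> * T powr \<alpha>"
      proof -
        have "\<bar>r - s\<bar> powr \<alpha> \<le> T powr \<alpha>" using r b s pars by (intro powr_mono2) auto
        moreover have "K0 * \<bar>r - s\<bar> powr \<alpha> \<le> \<bar>K0\<bar> * \<bar>r - s\<bar> powr \<alpha>" by (intro mult_right_mono) auto
        ultimately show ?thesis by (meson abs_ge_zero mult_left_mono order_trans)
      qed
      finally have "norm (z r) \<le> norm x + \<bar>K0\<bar> * T powr \<alpha>" using zs
        by (metis norm_triangle_sub add.commute add_le_cancel_left order_trans)
      then show "norm (z r) \<le> max 1 (norm x + \<bar>K0\<bar> * T powr \<alpha>) * 1" by simp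
    qed
  qed
  define Rs where "Rs = Inf SR"
  have Rs1: "Rs \<ge> 1" and Rsb: "\<And>r. r \<in> {s..b} \<Longrightarrow> norm (z r) \<le> Rs"
    using SRin unfolding Rs_def SR_def by auto
  have SRlow: "Rs \<le> R" if "R \<in> SR" for R
    unfolding Rs_def by (rule cInf_lower[OF that]) (auto simp: SR_def bdd_below_def)
  have intb: "\<forall>t\<in>{s..b}. has_young_integral A z s t (z t - z s)" using int b by auto
  have rem: "\<And>r r'. s \<le> r \<Longrightarrow> r \<le> r' \<Longrightarrow> r' \<le> b \<Longrightarrow>
      norm (z r' - z r - incr A r r' (z r)) \<le> KS * (C * Rs powr lam * Ks powr \<beta>) * (r' - r) powr \<theta>"
  proof -
    fix r r' assume rr: "s \<le> r" "r \<le> r'" "r' \<le> b"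
    have "norm (z r' - z r - incr A r r' (z r))
      \<le> (2 * (C * Rs powr lam * Ks powr \<beta>) / (1 - 2 powr (1 - \<alpha> * (1 + \<beta>)))) * (r' - r) powr (\<alpha> * (1 + \<beta>))"
      using remainder_bound[OF FH C pars(2,4,8) s(1) rr b(2) intb Rs1 _ Ks0] Rsb Ksh by auto
    then show "norm (z r' - z r - incr A r r' (z r)) \<le> KS * (C * Rs powr lam * Ks powr \<beta>) * (r' - r) powr \<theta>"
      unfolding KS \<theta>_def by (simp add: field_simps)
  qed
  define F where "F = 2 * C * Rs + KS * C * T powr (\<theta> - \<alpha>) * Rs powr lam * Ks powr \<beta>"
  have FSK: "F \<in> SK"
  proof -
    have F0: "F \<ge> 0" unfolding F_def using C Rs1 KSpos by simp
    have one: "norm (z r' - z r) \<le> F * (r' - r) powr \<alpha>" if rr: "s \<le> r" "r \<le> r'" "r' \<le> b" for r r'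
    proof -
      have g: "norm (incr A r r' (z r)) \<le> 2 * C * (r' - r) powr \<alpha> * Rs"
        using growth[OF FH C pars(4,6,7), of r r' Rs "z r"] rr b s Rs1 Rsb by auto
      have "(r' - r) powr \<theta> = (r' - r) powr \<alpha> * (r' - r) powr (\<theta> - \<alpha>)"
        by (simp add: powr_add[symmetric])
      also have "\<dots> \<le> (r' - r) powr \<alpha> * T powr (\<theta> - \<alpha>)"
      proof -
        have "\<theta> - \<alpha> \<ge> 0" using pars by (simp add: \<theta>_def)
        then have "(r' - r) powr (\<theta> - \<alpha>) \<le> T powr (\<theta> - \<alpha>)" using rr b s by (intro powr_mono2) auto
        then show ?thesis by (intro mult_left_mono) auto
      qed
      finally have pt: "(r' - r) powr \<theta> \<le> (r' - r) powr \<alpha> * T powr (\<theta> - \<alpha>)" .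
      have "norm (z r' - z r - incr A r r' (z r)) \<le> KS * (C * Rs powr lam * Ks powr \<beta>) * (r' - r) powr \<theta>"
        using rem rr by blast
      also have "\<dots> \<le> KS * (C * Rs powr lam * Ks powr \<beta>) * ((r' - r) powr \<alpha> * T powr (\<theta> - \<alpha>))"
        using pt KSpos C by (intro mult_left_mono) auto
      finally have r2: "norm (z r' - z r - incr A r r' (z r)) \<le> KS * C * T powr (\<theta> - \<alpha>) * Rs powr lam * Ks powr \<beta> * (r' - r) powr \<alpha>"
        by (simp add: algebra_simps)
      have "norm (z r' - z r) \<le> norm (incr A r r' (z r)) + norm (z r' - z r - incr A r r' (z r))"
        by (metis add.commute diff_add_cancel norm_triangle_ineq)
      then show ?thesis using g r2 unfolding F_def by (simp add: algebra_simps)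
    qed
    have "\<forall>i\<in>IK. norm (z (fst i) - z (snd i)) \<le> F * \<bar>fst i - snd i\<bar> powr \<alpha>"
    proof
      fix i assume i: "i \<in> IK"
      obtain r r' where i': "i = (r, r')" by (cases i)
      have rr: "r \<in> {s..b}" "r' \<in> {s..b}" using i i' IK_def by auto
      show "norm (z (fst i) - z (snd i)) \<le> F * \<bar>fst i - snd i\<bar> powr \<alpha>"
      proof (cases "r \<le> r'")
        case True
        then show ?thesis using one[of r r'] rr i' by (simp add: norm_minus_commute)
      next
        case False
        then show ?thesis using one[of r' r] rr i' by simp
      qed
    qed
    then show ?thesis using F0 unfolding SK_def by blast
  qed
  have KsF: "Ks \<le> 2 * C * Rs + KS * C * T powr (\<theta> - \<alpha>) * Rs powr lam * Ks powr \<beta>"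
    using SKlow[OF FSK] unfolding F_def .
  define M1 where "M1 = (2 * (KS * C * T powr (\<theta> - \<alpha>))) powr (1 / (1 - \<beta>))"
  have KsA: "Ks \<le> M0 * Rs"
  proof -
    have k1: "Ks \<le> max (2 * (2 * C * Rs)) ((2 * (KS * C * T powr (\<theta> - \<alpha>) * Rs powr lam)) powr (1 / (1 - \<beta>)))"
      using KsF C Rs1 KSpos pars Ks0 by (intro fix_bound) (auto simp: algebra_simps)
    have "(2 * (KS * C * T powr (\<theta> - \<alpha>) * Rs powr lam)) powr (1 / (1 - \<beta>))
        = M1 * Rs powr (lam / (1 - \<beta>))"
    proof -
      have nn: "0 \<le> 2 * (KS * C * T powr (\<theta> - \<alpha>))" using C KSpos by simp
      have "(2 * (KS * C * T powr (\<theta> - \<alpha>) * Rs powr lam)) powr (1 / (1 - \<beta>))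
          = ((2 * (KS * C * T powr (\<theta> - \<alpha>))) * Rs powr lam) powr (1 / (1 - \<beta>))"
        by (simp add: mult.assoc)
      also have "\<dots> = M1 * (Rs powr lam) powr (1 / (1 - \<beta>))"
        unfolding M1_def by (rule powr_mult)
      also have "(Rs powr lam) powr (1 / (1 - \<beta>)) = Rs powr (lam / (1 - \<beta>))"
        by (simp add: powr_powr)
      finally show ?thesis .
    qed
    also have "\<dots> \<le> M1 * Rs"
    proof -
      have "Rs powr (lam / (1 - \<beta>)) \<le> Rs powr 1" using Rs1 pars by (intro powr_mono) auto
      then show ?thesis unfolding M1_def using Rs1 by (intro mult_left_mono) auto
    qed
    finally have X: "(2 * (KS * C * T powr (\<theta> - \<alpha>) * Rs powr lam)) powr (1 / (1 - \<beta>)) \<le> M1 * Rs" .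
    have a1: "Ks \<le> max (4 * C * Rs) (M1 * Rs)" using k1 X by (simp add: max_def split: if_splits)
    have a2: "4 * C * Rs \<le> M0 * Rs" using M0 Rs1 by (intro mult_right_mono) auto
    have a3: "M1 * Rs \<le> M0 * Rs" using M0 Rs1 unfolding M1_def \<theta>_def by (intro mult_right_mono) auto
    have "max (4 * C * Rs) (M1 * Rs) \<le> M0 * Rs" using a2 a3 by (rule max.boundedI)
    then show ?thesis using a1 by (rule order_trans[rotated])
  qed
  have M0nn: "M0 \<ge> 0" using M0 C by linarith
  have RsB: "Rs \<le> 2 * max 1 (norm x)"
  proof -
    have "max 1 (norm x + Rs / 2) \<in> SR"
    proof -
      have "norm (z r) \<le> norm x + Rs / 2" if r: "r \<in> {s..b}" for r
      proof -
        have "norm (z r - z s) \<le> Ks * \<bar>r - s\<bar> powr \<alpha>" using Ksh[of r s] r b(1) by auto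
        also have "\<dots> \<le> (M0 * Rs) * h powr \<alpha>"
          using KsA Ks0 r b pars by (intro mult_mono powr_mono2) auto
        also have "\<dots> = (M0 * h powr \<alpha>) * Rs" by simp
        also have "\<dots> \<le> (1/2) * Rs" using h Rs1 by (intro mult_right_mono) auto
        finally have "norm (z r - z s) \<le> Rs / 2" by simp
        then show ?thesis using zs by (metis norm_triangle_sub add.commute add_le_cancel_left order_trans)
      qed
      then show ?thesis unfolding SR_def by (auto intro: max.coboundedI2)
    qed
    then have "Rs \<le> max 1 (norm x + Rs / 2)" by (rule SRlow)
    then show ?thesis by (cases "Rs \<le> 1") auto
  qed
  define m where "m = max 1 (norm x)"
  have m1: "m \<ge> 1" by (simp add: m_def)
  have KsB: "Ks \<le> 2 * M0 * m" using KsA RsB M0nn unfolding m_def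
    by (metis mult.assoc mult.commute mult_left_mono order_trans)
  have res1: "norm (z u - x) \<le> 2 * M0 * m * (u - s) powr \<alpha>"
  proof -
    have "norm (z u - x) \<le> Ks * \<bar>u - s\<bar> powr \<alpha>" using Ksh[of u s] u b zs by auto
    also have "\<dots> = Ks * (u - s) powr \<alpha>" using u by simp
    also have "\<dots> \<le> 2 * M0 * m * (u - s) powr \<alpha>" using KsB by (intro mult_right_mono) auto
    finally show ?thesis .
  qed
  have res2: "norm (z u - x - incr A s u x) \<le> KS * C * 2 powr lam * (2 * M0) powr \<beta> * m * (u - s) powr \<theta>"
  proof -
    have "norm (z u - x - incr A s u x) \<le> KS * (C * Rs powr lam * Ks powr \<beta>) * (u - s) powr \<theta>"
      using rem[of s u] u b zs by auto
    also have "\<dots> \<le> KS * (C * (2 * m) powr lam * (2 * M0 * m) powr \<beta>) * (u - s) powr \<theta>"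
    proof -
      have "Rs powr lam \<le> (2 * m) powr lam" using RsB Rs1 pars m_def by (intro powr_mono2) auto
      moreover have "Ks powr \<beta> \<le> (2 * M0 * m) powr \<beta>" using KsB Ks0 pars by (intro powr_mono2) auto
      ultimately have "Rs powr lam * Ks powr \<beta> \<le> (2 * m) powr lam * (2 * M0 * m) powr \<beta>"
        by (intro mult_mono) auto
      then have "C * Rs powr lam * Ks powr \<beta> \<le> C * (2 * m) powr lam * (2 * M0 * m) powr \<beta>"
        using C by (simp add: mult.assoc mult_left_mono)
      then show ?thesis using KSpos by (intro mult_right_mono mult_left_mono) auto
    qed
    also have "KS * (C * (2 * m) powr lam * (2 * M0 * m) powr \<beta>) * (u - s) powr \<theta>
        = (KS * C * (u - s) powr \<theta>) * ((2 * m) powr lam * (2 * M0 * m) powr \<beta>)"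
      by (simp add: ac_simps)
    also have "(2 * m) powr lam * (2 * M0 * m) powr \<beta> = (2 powr lam * (2 * M0) powr \<beta>) * m powr (lam + \<beta>)"
      using m1 M0nn by (simp add: powr_mult powr_add ac_simps)
    also have "(KS * C * (u - s) powr \<theta>) * ((2 powr lam * (2 * M0) powr \<beta>) * m powr (lam + \<beta>))
        \<le> (KS * C * (u - s) powr \<theta>) * ((2 powr lam * (2 * M0) powr \<beta>) * m)"
    proof -
      have "m powr (lam + \<beta>) \<le> m powr 1" using m1 pars by (intro powr_mono) auto
      then show ?thesis using KSpos C m1 by (intro mult_right_mono mult_left_mono) auto
    qed
    finally show ?thesis by (simp add: ac_simps)
  qed
  show ?thesis using res1 res2 unfolding m_def \<theta>_def by simp
qed


lemma field_FH:
  fixes A :: "real \<Rightarrow> 'a::real_normed_vector \<Rightarrow> 'a"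
  assumes "field_holder T \<alpha> \<beta> lam A"
  shows "\<exists>C\<ge>0. FH T \<alpha> \<beta> lam A C"
proof -
  obtain C where C: "\<forall>s t. 0 \<le> s \<and> s < t \<and> t \<le> T \<longrightarrow>
        norm (incr A s t 0) \<le> C * \<bar>t - s\<bar> powr \<alpha> \<and>
        (\<forall>R\<ge>1. \<forall>x y. x \<noteq> y \<and> norm x \<le> R \<and> norm y \<le> R \<longrightarrow>
           norm (incr A s t x - incr A s t y) \<le> C * \<bar>t - s\<bar> powr \<alpha> * R powr lam * norm (x - y) powr \<beta>)"
    using assms unfolding field_holder_def by blast
  define C' where "C' = max C 0"
  have "FH T \<alpha> \<beta> lam A C'"
    unfolding FH_def
  proof (intro allI impI conjI)
    fix s t assume st: "0 \<le> s \<and> s < t \<and> t \<le> T"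
    have "C * \<bar>t - s\<bar> powr \<alpha> \<le> C' * \<bar>t - s\<bar> powr \<alpha>" unfolding C'_def by (intro mult_right_mono) auto
    moreover have Cst: "norm (incr A s t 0) \<le> C * \<bar>t - s\<bar> powr \<alpha> \<and>
        (\<forall>R\<ge>1. \<forall>x y. x \<noteq> y \<and> norm x \<le> R \<and> norm y \<le> R \<longrightarrow>
           norm (incr A s t x - incr A s t y) \<le> C * \<bar>t - s\<bar> powr \<alpha> * R powr lam * norm (x - y) powr \<beta>)"
      using C st by blast
    ultimately show "norm (incr A s t 0) \<le> C' * \<bar>t - s\<bar> powr \<alpha>" by linarith
    fix R :: real and x y :: 'a assume R: "R \<ge> 1" and xy: "x \<noteq> y \<and> norm x \<le> R \<and> norm y \<le> R"
    have "C * \<bar>t - s\<bar> powr \<alpha> * R powr lam * norm (x - y) powr \<beta>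
        \<le> C' * \<bar>t - s\<bar> powr \<alpha> * R powr lam * norm (x - y) powr \<beta>"
      unfolding C'_def by (intro mult_right_mono) auto
    then show "norm (incr A s t x - incr A s t y) \<le> C' * \<bar>t - s\<bar> powr \<alpha> * R powr lam * norm (x - y) powr \<beta>"
      using Cst R xy by (meson order_trans)
  qed
  moreover have "C' \<ge> 0" unfolding C'_def by simp
  ultimately show ?thesis by blast
qed

lemma flow_uniform:
  fixes A :: "real \<Rightarrow> 'a::real_normed_vector \<Rightarrow> 'a"
  assumes FH: "FH T \<alpha> \<beta> lam A C" and C: "C \<ge> 0"
    and pars: "T > 0" "0 < \<alpha>" "\<alpha> < 1" "0 < \<beta>" "\<beta> < 1" "0 < lam" "lam + \<beta> \<le> 1" "\<alpha> * (1 + \<beta>) > 1"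
    and flow: "is_flow T \<alpha> A \<Phi> \<Psi>"
  shows "\<exists>h>0. \<exists>M\<ge>0. \<forall>s u x. 0 \<le> s \<and> s \<le> u \<and> u \<le> T \<and> u - s \<le> h \<longrightarrow>
      norm (\<Phi> s u x - x) \<le> M * max 1 (norm x) * (u - s) powr \<alpha> \<and>
      norm (\<Phi> s u x - x - incr A s u x) \<le> M * max 1 (norm x) * (u - s) powr (\<alpha> * (1 + \<beta>))"
proof -
  define KS where "KS = 2 / (1 - 2 powr (1 - \<alpha> * (1 + \<beta>)))"
  have c1: "2 powr (1 - \<alpha> * (1 + \<beta>)) < 1" using pars by (simp add: powr_less_one)
  have KSpos: "KS > 0" using c1 by (simp add: KS_def)
  define M0 where "M0 = max (4 * C) ((2 * (KS * C * T powr (\<alpha> * (1 + \<beta>) - \<alpha>))) powr (1 / (1 - \<beta>)))"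
  have M0: "M0 \<ge> 4 * C" "M0 \<ge> (2 * (KS * C * T powr (\<alpha> * (1 + \<beta>) - \<alpha>))) powr (1 / (1 - \<beta>))"
    by (auto simp: M0_def)
  have M0nn: "M0 \<ge> 0" using M0 C by linarith
  define h where "h = (1 / (2 * (M0 + 1))) powr (1 / \<alpha>)"
  have hpos: "h > 0" using M0nn by (simp add: h_def)
  have e: "h powr \<alpha> = 1 / (2 * (M0 + 1))" using M0nn pars by (simp add: h_def powr_powr)
  have hM: "M0 * h powr \<alpha> \<le> 1 / 2" unfolding e using M0nn by (simp add: field_simps)
  define M where "M = max (2 * M0) (KS * C * 2 powr lam * (2 * M0) powr \<beta>)"
  have Mnn: "M \<ge> 0" using M0nn by (simp add: M_def)
  have "\<forall>s u x. 0 \<le> s \<and> s \<le> u \<and> u \<le> T \<and> u - s \<le> h \<longrightarrow>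
      norm (\<Phi> s u x - x) \<le> M * max 1 (norm x) * (u - s) powr \<alpha> \<and>
      norm (\<Phi> s u x - x - incr A s u x) \<le> M * max 1 (norm x) * (u - s) powr (\<alpha> * (1 + \<beta>))"
  proof (intro allI impI)
    fix s u x assume su: "0 \<le> s \<and> s \<le> u \<and> u \<le> T \<and> u - s \<le> h"
    have sT: "s \<in> {0..T}" using su by auto
    have zs: "\<Phi> s s x = x" using flow sT unfolding is_flow_def by blast
    obtain K0 where K0: "\<forall>r\<in>{s..T}. \<forall>r'\<in>{s..T}. norm (\<Phi> s r' x - \<Phi> s r x) \<le> K0 * \<bar>r' - r\<bar> powr \<alpha>"
      using flow sT unfolding is_flow_def holder_path_def by blast
    have hol0: "\<forall>r\<in>{s..T}. \<forall>r'\<in>{s..T}. norm (\<Phi> s r x - \<Phi> s r' x) \<le> K0 * \<bar>r - r'\<bar> powr \<alpha>"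
      using K0 by blast
    have int: "\<forall>t\<in>{s..T}. has_young_integral A (\<lambda>r. \<Phi> s r x) s t (\<Phi> s t x - \<Phi> s s x)"
      using flow sT zs unfolding is_flow_def by auto
    have res: "norm (\<Phi> s u x - x) \<le> 2 * M0 * max 1 (norm x) * (u - s) powr \<alpha>
     \<and> norm (\<Phi> s u x - x - incr A s u x) \<le> KS * C * 2 powr lam * (2 * M0) powr \<beta> * max 1 (norm x) * (u - s) powr (\<alpha> * (1 + \<beta>))"
      using flow_local[OF FH C pars KS_def M0 hpos hM, of s "\<lambda>r. \<Phi> s r x" x K0 u] su zs hol0 int
      by auto
    have m: "max 1 (norm x) * (u - s) powr \<alpha> \<ge> 0" "max 1 (norm x) * (u - s) powr (\<alpha> * (1 + \<beta>)) \<ge> 0"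
      by auto
    have "2 * M0 * max 1 (norm x) * (u - s) powr \<alpha> \<le> M * max 1 (norm x) * (u - s) powr \<alpha>"
      using mult_right_mono[OF _ m(1), of "2 * M0" M] by (simp add: M_def mult.assoc)
    moreover have "KS * C * 2 powr lam * (2 * M0) powr \<beta> * max 1 (norm x) * (u - s) powr (\<alpha> * (1 + \<beta>))
       \<le> M * max 1 (norm x) * (u - s) powr (\<alpha> * (1 + \<beta>))"
      using mult_right_mono[OF _ m(2), of "KS * C * 2 powr lam * (2 * M0) powr \<beta>" M] by (simp add: M_def mult.assoc)
    ultimately show "norm (\<Phi> s u x - x) \<le> M * max 1 (norm x) * (u - s) powr \<alpha> \<and>
      norm (\<Phi> s u x - x - incr A s u x) \<le> M * max 1 (norm x) * (u - s) powr (\<alpha> * (1 + \<beta>))"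
      using res by linarith
  qed
  then show ?thesis using hpos Mnn by blast
qed


lemma norm3:
  fixes X Y Z :: "'a::real_normed_vector"
  shows "norm (X - Y - Z) \<le> norm X + norm Y + norm Z"
  using norm_triangle_ineq4[of "X - Y" Z] norm_triangle_ineq4[of X Y] by linarith

lemma fin_bound:
  fixes H \<delta> D q \<theta> \<gamma> :: real
  assumes "H \<ge> 0" "\<delta> \<ge> 0" "\<delta> \<le> D * q powr \<theta>" "q \<ge> 0" "\<gamma> > 0"
  shows "H * \<delta> powr \<gamma> \<le> (H * D powr \<gamma>) * q powr (\<theta> * \<gamma>)"
proof -
  have D: "D * q powr \<theta> \<ge> 0" using assms by linarith
  have "\<delta> powr \<gamma> \<le> (D * q powr \<theta>) powr \<gamma>" using assms by (intro powr_mono2) auto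
  also have "\<dots> = D powr \<gamma> * q powr (\<theta> * \<gamma>)" by (simp add: powr_mult powr_powr)
  finally show ?thesis using assms by (simp add: mult.assoc mult_left_mono)
qed

lemma uniq:
  fixes A :: "real \<Rightarrow> 'a::real_normed_vector \<Rightarrow> 'a"
  assumes FH: "FH T \<alpha> \<beta> lam A C" and C: "C \<ge> 0"
    and pars: "T > 0" "0 < \<alpha>" "\<alpha> < 1" "0 < \<beta>" "\<beta> < 1" "0 < lam" "lam + \<beta> \<le> 1" "\<alpha> * (1 + \<beta>) > 1"
    and flow: "is_flow T \<alpha> A \<Phi> \<Psi>"
    and flh: "flow_locally_holder T \<gamma> \<Phi> \<Psi>"
    and gam: "0 < \<gamma>" "\<alpha> * \<gamma> * (1 + \<beta>) > 1"
    and hM: "h > 0" "M \<ge> 0"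
    and unif: "\<forall>s u x. 0 \<le> s \<and> s \<le> u \<and> u \<le> T \<and> u - s \<le> h \<longrightarrow>
      norm (\<Phi> s u x - x) \<le> M * max 1 (norm x) * (u - s) powr \<alpha> \<and>
      norm (\<Phi> s u x - x - incr A s u x) \<le> M * max 1 (norm x) * (u - s) powr (\<alpha> * (1 + \<beta>))"
    and yh: "holder_path \<alpha> 0 T y" and ys: "yde_solution T A x0 y"
    and t: "t \<in> {0..T}"
  shows "y t = \<Phi> 0 t x0"
proof -
  define \<theta> where "\<theta> = \<alpha> * (1 + \<beta>)"
  have th1: "\<theta> > 1" using pars by (simp add: \<theta>_def)
  have thg: "\<theta> * \<gamma> > 1" using gam by (simp add: \<theta>_def algebra_simps)
  obtain Ky where Ky: "\<forall>s\<in>{0..T}. \<forall>t\<in>{0..T}. norm (y t - y s) \<le> Ky * \<bar>t - s\<bar> powr \<alpha>"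
    using yh unfolding holder_path_def by blast
  define Ky' where "Ky' = \<bar>Ky\<bar>"
  have Ky'0: "Ky' \<ge> 0" by (simp add: Ky'_def)
  have hy: "\<forall>r\<in>{0..T}. \<forall>r'\<in>{0..T}. norm (y r - y r') \<le> Ky' * \<bar>r - r'\<bar> powr \<alpha>"
  proof (intro ballI)
    fix r r' assume "r \<in> {0..T}" "r' \<in> {0..T}"
    then have "norm (y r - y r') \<le> Ky * \<bar>r - r'\<bar> powr \<alpha>" using Ky by blast
    also have "\<dots> \<le> Ky' * \<bar>r - r'\<bar> powr \<alpha>" unfolding Ky'_def by (intro mult_right_mono) auto
    finally show "norm (y r - y r') \<le> Ky' * \<bar>r - r'\<bar> powr \<alpha>" .
  qed
  have y0: "y 0 = x0" using ys unfolding yde_solution_def by blast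
  define Ry where "Ry = max 1 (norm x0 + Ky' * T powr \<alpha>)"
  have Ry1: "Ry \<ge> 1" by (simp add: Ry_def)
  have yb: "norm (y r) \<le> Ry" if r: "r \<in> {0..T}" for r
  proof -
    have "0 \<in> {0..T}" using pars by auto
    then have "norm (y r - y 0) \<le> Ky' * \<bar>r - 0\<bar> powr \<alpha>" using hy r by blast
    also have "\<dots> \<le> Ky' * T powr \<alpha>" using r pars Ky'0 by (intro mult_left_mono powr_mono2) auto
    finally have "norm (y r) \<le> norm x0 + Ky' * T powr \<alpha>" using y0
      by (metis norm_triangle_sub add.commute add_le_cancel_left order_trans)
    then show ?thesis unfolding Ry_def by linarith
  qed
  define My where "My = 2 * (C * Ry powr lam * Ky' powr \<beta>) / (1 - 2 powr (1 - \<alpha> * (1 + \<beta>)))"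
  have c1: "2 powr (1 - \<alpha> * (1 + \<beta>)) < 1" using pars by (simp add: powr_less_one)
  have My0: "My \<ge> 0" unfolding My_def using c1 C by simp
  have inty: "\<forall>t\<in>{0..T}. has_young_integral A y 0 t (y t - y 0)" using ys y0 unfolding yde_solution_def by auto
  have remy: "norm (y u - y s - incr A s u (y s)) \<le> My * (u - s) powr \<theta>" if su: "0 \<le> s" "s \<le> u" "u \<le> T" for s u
    using remainder_bound[OF FH C pars(2,4,8) order_refl su(1) su(2) su(3) order_refl inty Ry1 _ Ky'0 hy] yb
    unfolding My_def \<theta>_def by auto
  define h3 where "h3 = min (min h 1) ((1 / (2 * (M + 1))) powr (1 / \<alpha>))"
  have h3: "h3 > 0" "h3 \<le> h" "h3 \<le> 1" using hM by (auto simp: h3_def)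
  have Msmall: "M * d powr \<alpha> \<le> 1 / 2" if d: "0 \<le> d" "d \<le> h3" for d
  proof -
    have "d powr \<alpha> \<le> ((1 / (2 * (M + 1))) powr (1 / \<alpha>)) powr \<alpha>"
      using d pars by (intro powr_mono2) (auto simp: h3_def)
    also have "\<dots> = 1 / (2 * (M + 1))" using hM pars by (simp add: powr_powr)
    finally have "M * d powr \<alpha> \<le> M * (1 / (2 * (M + 1)))" using hM by (intro mult_left_mono) auto
    also have "\<dots> \<le> 1 / 2" using hM by (simp add: field_simps)
    finally show ?thesis .
  qed
  have unif1: "norm (\<Phi> s u x - x) \<le> M * max 1 (norm x) * (u - s) powr \<alpha>"
    and unif2: "norm (\<Phi> s u x - x - incr A s u x) \<le> M * max 1 (norm x) * (u - s) powr \<theta>"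
    if "0 \<le> s" "s \<le> u" "u \<le> T" "u - s \<le> h" for s u x
    using unif that unfolding \<theta>_def by blast+
  define g where "g = (\<lambda>s. \<Phi> s t (y s))"
  have deriv: "(g has_derivative (\<lambda>_. 0)) (at s within {0..t})" if s: "s \<in> {0..t}" for s
  proof -
    have sT: "s \<in> {0..T}" "t \<in> {s..T}" using s t by auto
    obtain H0 where H0: "\<forall>a\<in>cball 0 (2 * Ry + 1). \<forall>b\<in>cball 0 (2 * Ry + 1).
        norm (\<Phi> s t a - \<Phi> s t b) \<le> H0 * norm (a - b) powr \<gamma>"
      using flh sT unfolding flow_locally_holder_def holder_on_def by (meson bounded_cball)
    define H where "H = \<bar>H0\<bar>"
    have H0': "H \<ge> 0" by (simp add: H_def)
    have Hb: "norm (\<Phi> s t a - \<Phi> s t b) \<le> H * norm (a - b) powr \<gamma>"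
      if "norm a \<le> 2 * Ry + 1" "norm b \<le> 2 * Ry + 1" for a b
    proof -
      have "norm (\<Phi> s t a - \<Phi> s t b) \<le> H0 * norm (a - b) powr \<gamma>" using H0 that by auto
      also have "\<dots> \<le> H * norm (a - b) powr \<gamma>" unfolding H_def by (intro mult_right_mono) auto
      finally show ?thesis .
    qed
    define D1 where "D1 = My + M * (2 * Ry + 1)"
    define D2 where "D2 = C * (2 * Ry + 1) powr lam"
    define Dr where "Dr = max (2 * D1) ((2 * D2) powr (1 / (1 - \<beta>)))"
    define D where "D = max (M * Ry + My) Dr"
    have D10: "D1 \<ge> 0" "D2 \<ge> 0" using My0 hM Ry1 C by (auto simp: D1_def D2_def)
    have key: "\<forall>r\<in>{0..t}. \<bar>r - s\<bar> \<le> h3 \<longrightarrow> norm (g r - g s) \<le> (H * D powr \<gamma>) * \<bar>r - s\<bar> powr (\<theta> * \<gamma>)"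
    proof (intro ballI impI)
      fix r assume r: "r \<in> {0..t}" and rs: "\<bar>r - s\<bar> \<le> h3"
      consider "r = s" | "r < s" | "r > s" by linarith
      then show "norm (g r - g s) \<le> (H * D powr \<gamma>) * \<bar>r - s\<bar> powr (\<theta> * \<gamma>)"
      proof cases
        case 1 then show ?thesis using H0' by simp
      next
        case 2
        define q where "q = s - r"
        have q: "q \<ge> 0" "q \<le> h3" "\<bar>r - s\<bar> = q" using 2 rs by (auto simp: q_def)
        have rT: "0 \<le> r" "r \<le> s" "s \<le> T" "s - r \<le> h" using r s t 2 q h3 by (auto simp: q_def)
        define w where "w = \<Phi> r s (y r)"
        have yr: "norm (y r) \<le> Ry" "max 1 (norm (y r)) \<le> Ry" using yb r t Ry1 by auto
        have ys': "norm (y s) \<le> Ry" using yb sT by auto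
        have "norm (w - y r) \<le> M * max 1 (norm (y r)) * q powr \<alpha>"
          using unif1[OF rT] unfolding w_def q_def by simp
        also have "\<dots> \<le> M * Ry * q powr \<alpha>" using yr hM by (intro mult_right_mono mult_left_mono) auto
        also have "\<dots> = (M * q powr \<alpha>) * Ry" by simp
        also have "\<dots> \<le> (1/2) * Ry" using Msmall[OF q(1,2)] Ry1 by (intro mult_right_mono) auto
        finally have "norm (w - y r) \<le> Ry / 2" by simp
        moreover have "norm w \<le> norm (y r) + norm (w - y r)" by (rule norm_triangle_sub)
        ultimately have wb: "norm w \<le> 2 * Ry + 1" using yr Ry1 by linarith
        have e1: "norm (w - y r - incr A r s (y r)) \<le> M * Ry * q powr \<theta>"
        proof -
          have "norm (w - y r - incr A r s (y r)) \<le> M * max 1 (norm (y r)) * q powr \<theta>"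
            using unif2[OF rT] unfolding w_def q_def by simp
          also have "\<dots> \<le> M * Ry * q powr \<theta>" using yr hM by (intro mult_right_mono mult_left_mono) auto
          finally show ?thesis .
        qed
        have e2: "norm (y s - y r - incr A r s (y r)) \<le> My * q powr \<theta>"
          using remy[of r s] rT unfolding q_def by simp
        have "w - y s = (w - y r - incr A r s (y r)) - (y s - y r - incr A r s (y r))" by simp
        then have "norm (w - y s) \<le> norm (w - y r - incr A r s (y r)) + norm (y s - y r - incr A r s (y r))"
          by (metis norm_triangle_ineq4)
        then have "norm (w - y s) \<le> (M * Ry + My) * q powr \<theta>" using e1 e2 by (simp add: algebra_simps)
        also have "\<dots> \<le> D * q powr \<theta>" unfolding D_def by (intro mult_right_mono) auto
        finally have del: "norm (w - y s) \<le> D * q powr \<theta>" .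
        have "g r = \<Phi> s t w" unfolding g_def w_def using flow rT sT unfolding is_flow_def by auto
        then have "norm (g r - g s) \<le> H * norm (w - y s) powr \<gamma>"
          unfolding g_def using Hb[OF wb] ys' Ry1 by simp
        also have "\<dots> \<le> (H * D powr \<gamma>) * q powr (\<theta> * \<gamma>)"
          using fin_bound[OF H0' _ del q(1) gam(1)] by simp
        finally show ?thesis using q by simp
      next
        case 3
        define q where "q = r - s"
        have q: "q > 0" "q \<le> h3" "\<bar>r - s\<bar> = q" "q \<le> 1" using 3 rs h3 by (auto simp: q_def)
        have rT: "0 \<le> s" "s \<le> r" "r \<le> T" "r - s \<le> h" using r s t 3 q h3 by (auto simp: q_def)
        have homeo: "homeomorphism UNIV UNIV (\<Phi> s r) (\<Psi> s r)" using flow rT unfolding is_flow_def by auto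
        define v where "v = \<Psi> s r (y r)"
        have Pv: "\<Phi> s r v = y r" using homeo unfolding homeomorphism_def v_def by auto
        have yr: "norm (y r) \<le> Ry" using yb r t by auto
        have ys': "norm (y s) \<le> Ry" "max 1 (norm (y s)) \<le> Ry" using yb sT Ry1 by auto
        have "norm (y r - v) \<le> M * max 1 (norm v) * q powr \<alpha>"
          using unif1[OF rT, of v] Pv unfolding q_def by simp
        also have "\<dots> = (M * q powr \<alpha>) * max 1 (norm v)" by simp
        also have "\<dots> \<le> (1/2) * max 1 (norm v)" using Msmall[of q] q by (intro mult_right_mono) auto
        finally have "norm (y r - v) \<le> max 1 (norm v) / 2" by simp
        moreover have "norm v \<le> norm (y r) + norm (v - y r)" by (rule norm_triangle_sub)
        moreover have "norm (v - y r) = norm (y r - v)" by (rule norm_minus_commute)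
        ultimately have "norm v \<le> Ry + max 1 (norm v) / 2" using yr by linarith
        then have vb: "norm v \<le> 2 * Ry + 1" using Ry1 by (cases "norm v \<le> 1") auto
        have mv: "max 1 (norm v) \<le> 2 * Ry + 1" using vb Ry1 by auto
        define \<delta> where "\<delta> = norm (v - y s)"
        have e1: "norm (y r - y s - incr A s r (y s)) \<le> My * q powr \<theta>"
          using remy[of s r] rT unfolding q_def by simp
        have e2: "norm (incr A s r v - incr A s r (y s)) \<le> D2 * q powr \<alpha> * \<delta> powr \<beta>"
        proof -
          have "norm (incr A s r v - incr A s r (y s)) \<le> C * (r - s) powr \<alpha> * (2 * Ry + 1) powr lam * norm (v - y s) powr \<beta>"
            using FH_diff[OF FH C rT(1,2,3), of "2 * Ry + 1" v "y s"] vb ys' Ry1 by auto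
          then show ?thesis unfolding D2_def \<delta>_def q_def by (simp add: algebra_simps)
        qed
        have e3: "norm (\<Phi> s r v - v - incr A s r v) \<le> M * (2 * Ry + 1) * q powr \<theta>"
        proof -
          have "norm (\<Phi> s r v - v - incr A s r v) \<le> M * max 1 (norm v) * q powr \<theta>"
            using unif2[OF rT, of v] unfolding q_def by simp
          also have "\<dots> \<le> M * (2 * Ry + 1) * q powr \<theta>" using mv hM by (intro mult_right_mono mult_left_mono) auto
          finally show ?thesis .
        qed
        have "v - y s = (y r - y s - incr A s r (y s)) - (incr A s r v - incr A s r (y s)) - (\<Phi> s r v - v - incr A s r v)"
          using Pv by (simp add: algebra_simps)
        then have "\<delta> \<le> norm (y r - y s - incr A s r (y s)) + norm (incr A s r v - incr A s r (y s)) + norm (\<Phi> s r v - v - incr A s r v)"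
          unfolding \<delta>_def by (metis norm3)
        then have "\<delta> \<le> D1 * q powr \<theta> + (D2 * q powr \<alpha>) * \<delta> powr \<beta>"
          using e1 e2 e3 unfolding D1_def by (simp add: algebra_simps)
        then have dl: "\<delta> \<le> max (2 * (D1 * q powr \<theta>)) ((2 * (D2 * q powr \<alpha>)) powr (1 / (1 - \<beta>)))"
          using D10 pars by (intro fix_bound) (auto simp: \<delta>_def)
        have p2: "(2 * (D2 * q powr \<alpha>)) powr (1 / (1 - \<beta>)) \<le> (2 * D2) powr (1 / (1 - \<beta>)) * q powr \<theta>"
        proof -
          have "(2 * (D2 * q powr \<alpha>)) powr (1 / (1 - \<beta>)) = (2 * D2) powr (1 / (1 - \<beta>)) * (q powr \<alpha>) powr (1 / (1 - \<beta>))"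
            by (simp add: powr_mult[symmetric] mult.assoc)
          also have "(q powr \<alpha>) powr (1 / (1 - \<beta>)) = q powr (\<alpha> / (1 - \<beta>))" by (simp add: powr_powr)
          also have "q powr (\<alpha> / (1 - \<beta>)) \<le> q powr \<theta>"
          proof (rule powr_mono')
            have "(1 + \<beta>) * (1 - \<beta>) \<le> 1" by (simp add: algebra_simps)
            then have "1 + \<beta> \<le> 1 / (1 - \<beta>)" using pars by (simp add: field_simps)
            then have "\<alpha> * (1 + \<beta>) \<le> \<alpha> * (1 / (1 - \<beta>))" using pars by (intro mult_left_mono) auto
            then show "\<theta> \<le> \<alpha> / (1 - \<beta>)" unfolding \<theta>_def by simp
          qed (use q in auto)
          finally show ?thesis by (simp add: mult_left_mono)
        qed
        have del: "\<delta> \<le> D * q powr \<theta>"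
        proof -
          have "2 * (D1 * q powr \<theta>) \<le> Dr * q powr \<theta>" unfolding Dr_def
            by (simp add: mult.assoc[symmetric] mult_right_mono)
          moreover have "(2 * D2) powr (1 / (1 - \<beta>)) * q powr \<theta> \<le> Dr * q powr \<theta>" unfolding Dr_def
            by (intro mult_right_mono) auto
          ultimately have "\<delta> \<le> Dr * q powr \<theta>" using dl p2 by (simp add: max_def split: if_splits)
          also have "\<dots> \<le> D * q powr \<theta>" unfolding D_def by (intro mult_right_mono) auto
          finally show ?thesis .
        qed
        have "g r = \<Phi> r t (\<Phi> s r v)" unfolding g_def using Pv by simp
        also have "\<dots> = \<Phi> s t v"
        proof -
          have "0 \<le> s \<and> s \<le> r \<and> r \<le> t \<and> t \<le> T" using rT r sT by auto
          then show ?thesis using flow unfolding is_flow_def by blast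
        qed
        finally have "norm (g r - g s) \<le> H * norm (v - y s) powr \<gamma>"
          unfolding g_def using Hb[OF vb] ys' Ry1 by simp
        also have "\<dots> \<le> (H * D powr \<gamma>) * q powr (\<theta> * \<gamma>)"
          using fin_bound[OF H0' _ del _ gam(1)] q unfolding \<delta>_def by simp
        finally show ?thesis using q by simp
      qed
    qed
    show ?thesis
      by (rule deriv_zero_holder[OF h3(1) thg _ key]) (simp add: H0')
  qed
  obtain c where c: "\<forall>x\<in>{0..t}. g x = c"
    using has_derivative_zero_constant[of "{0..t}" g] deriv by auto
  have "g 0 = g t" using c t by auto
  moreover have "g 0 = \<Phi> 0 t x0" using y0 by (simp add: g_def)
  moreover have "g t = y t" using flow t unfolding g_def is_flow_def by auto
  ultimately show ?thesis by simp
qed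

theorem mainTheorem18:
  fixes T \<alpha> \<beta> lam \<gamma> :: real
    and A :: "real \<Rightarrow> 'a::{banach, second_countable_topology} \<Rightarrow> 'a"
    and \<Phi> \<Psi> :: "real \<Rightarrow> real \<Rightarrow> 'a \<Rightarrow> 'a"
    and x0 :: 'a
  assumes "T > 0"
    and "0 < \<alpha>" "\<alpha> < 1" "0 < \<beta>" "\<beta> < 1" "0 < lam" "lam \<le> 1"
    and "\<alpha> * (1 + \<beta>) > 1" "\<beta> + lam \<le> 1"
    and "field_holder T \<alpha> \<beta> lam A"
    and "is_flow T \<alpha> A \<Phi> \<Psi>"
    and "flow_locally_holder T \<gamma> \<Phi> \<Psi>"
    and "0 < \<gamma>" "\<gamma> < 1" "\<alpha> * \<gamma> * (1 + \<beta>) > 1"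
  shows "\<exists>x. holder_path \<alpha> 0 T x \<and> yde_solution T A x0 x \<and>
           (\<forall>y. holder_path \<alpha> 0 T y \<and> yde_solution T A x0 y \<longrightarrow> (\<forall>t\<in>{0..T}. y t = x t))"
proof -
  obtain C where C: "C \<ge> 0" "FH T \<alpha> \<beta> lam A C" using field_FH[OF assms(10)] by blast
  have lb: "lam + \<beta> \<le> 1" using assms(9) by simp
  have pars: "T > 0" "0 < \<alpha>" "\<alpha> < 1" "0 < \<beta>" "\<beta> < 1" "0 < lam" "lam + \<beta> \<le> 1" "\<alpha> * (1 + \<beta>) > 1"
    using assms lb by auto
  obtain h M where hM: "h > 0" "M \<ge> 0" and unif: "\<forall>s u x. 0 \<le> s \<and> s \<le> u \<and> u \<le> T \<and> u - s \<le> h \<longrightarrow>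
      norm (\<Phi> s u x - x) \<le> M * max 1 (norm x) * (u - s) powr \<alpha> \<and>
      norm (\<Phi> s u x - x - incr A s u x) \<le> M * max 1 (norm x) * (u - s) powr (\<alpha> * (1 + \<beta>))"
    using flow_uniform[OF C(2) C(1) pars assms(11)] by blast
  have T0: "0 \<in> {0..T}" using assms(1) by simp
  show ?thesis
  proof (intro exI[of _ "\<lambda>t. \<Phi> 0 t x0"] conjI allI impI ballI)
    show "holder_path \<alpha> 0 T (\<lambda>t. \<Phi> 0 t x0)" using assms(11) T0 unfolding is_flow_def by blast
    have "\<Phi> 0 0 x0 = x0" using assms(11) T0 unfolding is_flow_def by blast
    moreover have "\<forall>t\<in>{0..T}. has_young_integral A (\<lambda>t. \<Phi> 0 t x0) 0 t (\<Phi> 0 t x0 - x0)"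
      using assms(11) T0 unfolding is_flow_def by blast
    ultimately show "yde_solution T A x0 (\<lambda>t. \<Phi> 0 t x0)" unfolding yde_solution_def by simp
  next
    fix y t assume y: "holder_path \<alpha> 0 T y \<and> yde_solution T A x0 y" and t: "t \<in> {0..T}"
    show "y t = \<Phi> 0 t x0"
      using uniq[OF C(2) C(1) pars assms(11) assms(12) assms(13) assms(15) hM unif _ _ t] y by blast
  qed
qed

end
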